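(* Let $I=\mathcal{M}^0[K,G,K;P]$ be a finite Rees $0$-matrix semigroup with $|K|=2$, where $P$ is the $2\times2$ matrix with $p_{\kappa,\kappa}=e$ and $p_{\lambda,\kappa}=0$ for $\lambda\ne\kappa$. If $|G|=1$, then $\sigma_i(I)=\infty$. If $|G|>1$, then $\sigma_i(I)=n+1$, where $n$ is the minimum index of a proper subgroup of $G$.
   Context: $G$ is a finite group with identity $e$. $\mathcal{M}^0[K,G,K;P]$ is $(K\times G\times K)\cup\{0\}$ with $(\kappa,g,\lambda)(\mu,h,\nu)=(\kappa,gp_{\lambda,\mu}h,\nu)$ if $p_{\lambda,\mu}\ne0$, $=0$ otherwise, and $0$ a zero element; it is an inverse semigroup. An inverse subsemigroup is a subsemigroup closed under taking the unique inverse $a^{-1}$ (with $aa^{-1}a=a$, $a^{-1}aa^{-1}=a^{-1}$). $\sigma_i(I)$ is the least positive integer $n$ such that $I$ is the union of $n$ proper inverse subsemigroups, or $\infty$ if none exists. *)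

theory Defs
  imports "HOL-Algebra.Algebra" "HOL-Library.Extended_Nat"
begin

text \<open>Elements: None is the zero,
  Some (kappa, g, lambda) is the triple. The sandwich matrix P has entries
  in G with a zero adjoined: P l m = None means p_{l,m} = 0.\<close>

definition rees0_carrier :: "'k set \<Rightarrow> ('g, 'b) monoid_scheme \<Rightarrow> ('k \<times> 'g \<times> 'k) option set" where
  "rees0_carrier K G = {None} \<union> Some ` (K \<times> carrier G \<times> K)"

fun rees0_mult :: "('g, 'b) monoid_scheme \<Rightarrow> ('k \<Rightarrow> 'k \<Rightarrow> 'g option)
    \<Rightarrow> ('k \<times> 'g \<times> 'k) option \<Rightarrow> ('k \<times> 'g \<times> 'k) option \<Rightarrow> ('k \<times> 'g \<times> 'k) option" where
  "rees0_mult G P (Some (k1, g, l1)) (Some (k2, h, l2)) =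
     (case P l1 k2 of None \<Rightarrow> None | Some p \<Rightarrow> Some (k1, g \<otimes>\<^bsub>G\<^esub> p \<otimes>\<^bsub>G\<^esub> h, l2))"
| "rees0_mult G P _ _ = None"

definition diag_matrix :: "('g, 'b) monoid_scheme \<Rightarrow> 'k \<Rightarrow> 'k \<Rightarrow> 'g option" where
  "diag_matrix G l k = (if l = k then Some \<one>\<^bsub>G\<^esub> else None)"

text \<open>Inverse subsemigroup of a semigroup (I, mul): a subset closed under
  multiplication and under taking (the unique) inverse.\<close>
definition inverse_subsemigroup :: "'a set \<Rightarrow> ('a \<Rightarrow> 'a \<Rightarrow> 'a) \<Rightarrow> 'a set \<Rightarrow> bool" where
  "inverse_subsemigroup I mul S \<longleftrightarrow>
     S \<subseteq> I \<and>
     (\<forall>a\<in>S. \<forall>b\<in>S. mul a b \<in> S) \<and>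
     (\<forall>a\<in>S. \<forall>b\<in>I. mul (mul a b) a = a \<and> mul (mul b a) b = b \<longrightarrow> b \<in> S)"

definition sigma_i :: "'a set \<Rightarrow> ('a \<Rightarrow> 'a \<Rightarrow> 'a) \<Rightarrow> enat" where
  "sigma_i I mul =
     (if \<exists>n C. finite C \<and> card C = n \<and> (\<forall>S\<in>C. inverse_subsemigroup I mul S \<and> S \<noteq> I) \<and> \<Union>C = I
      then enat (LEAST n. \<exists>C. finite C \<and> card C = n \<and>
               (\<forall>S\<in>C. inverse_subsemigroup I mul S \<and> S \<noteq> I) \<and> \<Union>C = I)
      else \<infinity>)"

definition min_proper_index :: "('g, 'b) monoid_scheme \<Rightarrow> nat" where
  "min_proper_index G =
     (LEAST m. \<exists>H. subgroup H G \<and> H \<noteq> carrier G \<and> card (rcosets\<^bsub>G\<^esub> H) = m)"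

end

theory Submission imports Defs begin

fun iv :: "('g, 'b) monoid_scheme \<Rightarrow> ('k \<times> 'g \<times> 'k) option \<Rightarrow> ('k \<times> 'g \<times> 'k) option" where
  "iv G None = None"
| "iv G (Some (i, g, j)) = Some (j, inv\<^bsub>G\<^esub> g, i)"

locale brandt = group +
  fixes K :: "'k set" and a b :: 'k
  assumes fin: "finite (carrier G)" and Kab: "K = {a, b}" and ab: "a \<noteq> b"
begin

abbreviation "II \<equiv> rees0_carrier K G"
abbreviation "MM \<equiv> rees0_mult G (diag_matrix G)"

lemma mem_II: "x \<in> II \<longleftrightarrow> x = None \<or> (\<exists>i g j. x = Some (i, g, j) \<and> i \<in> K \<and> g \<in> carrier G \<and> j \<in> K)"
  unfolding rees0_carrier_def by auto

lemma Some_II[simp]: "Some (i, g, j) \<in> II \<longleftrightarrow> i \<in> K \<and> g \<in> carrier G \<and> j \<in> K"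
  unfolding rees0_carrier_def by auto

lemma None_II[simp]: "None \<in> II"
  unfolding rees0_carrier_def by auto

lemma mul_SS[simp]: "g \<in> carrier G \<Longrightarrow> MM (Some (i, g, j)) (Some (k, h, l)) = (if j = k then Some (i, g \<otimes> h, l) else None)"
  by (simp add: diag_matrix_def)

declare rees0_mult.simps(1)[simp del]

lemma mul_N1[simp]: "MM None x = None" by simp
lemma mul_N2[simp]: "MM x None = None" by (cases x) auto

lemma iv_II: "x \<in> II \<Longrightarrow> iv G x \<in> II"
  by (auto simp: mem_II)

lemma inv_char:
  assumes "x \<in> II" "y \<in> II"
  shows "(MM (MM x y) x = x \<and> MM (MM y x) y = y) \<longleftrightarrow> y = iv G x"
proof (cases x)
  case None
  then show ?thesis using assms by (cases y) auto
next
  case (Some v)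
  then obtain i g j where x: "x = Some (i, g, j)" "i \<in> K" "g \<in> carrier G" "j \<in> K"
    using assms by (auto simp: mem_II)
  show ?thesis
  proof (cases y)
    case None
    then show ?thesis using x by simp
  next
    case (Some w)
    then obtain k h l where y: "y = Some (k, h, l)" "k \<in> K" "h \<in> carrier G" "l \<in> K"
      using assms by (auto simp: mem_II)
    have "g \<otimes> h \<otimes> g = g \<longleftrightarrow> h = inv g"
      using x y by (metis inv_closed l_inv m_assoc m_closed r_cancel_one r_inv r_one)
    moreover have "h = inv g \<Longrightarrow> h \<otimes> g \<otimes> h = h"
      using x y by (simp add: m_assoc)
    ultimately show ?thesis using x y by (auto split: if_splits)
  qed
qed

lemma invsub_iff:
  "inverse_subsemigroup II MM S \<longleftrightarrow> S \<subseteq> II \<and> (\<forall>x\<in>S. \<forall>y\<in>S. MM x y \<in> S) \<and> (\<forall>x\<in>S. iv G x \<in> S)"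
  unfolding inverse_subsemigroup_def
  by (smt (verit, best) inv_char iv_II subset_iff)


definition HS where "HS S = {h \<in> carrier G. Some (a, h, a) \<in> S}"
definition AS where "AS S = {x \<in> carrier G. Some (a, x, b) \<in> S}"

lemma aK[simp]: "a \<in> K" and bK[simp]: "b \<in> K" using Kab by auto

lemma HS_sub:
  assumes S: "inverse_subsemigroup II MM S" and g: "g \<in> carrier G" "Some (a, g, b) \<in> S"
  shows "subgroup (HS S) G"
proof -
  have C: "\<And>x y. x \<in> S \<Longrightarrow> y \<in> S \<Longrightarrow> MM x y \<in> S" and V: "\<And>x. x \<in> S \<Longrightarrow> iv G x \<in> S"
    using S by (auto simp: invsub_iff)
  have "MM (Some (a, g, b)) (iv G (Some (a, g, b))) \<in> S" using C V g by blast
  then have one: "Some (a, \<one>, a) \<in> S" using g by simp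
  show ?thesis
  proof (rule subgroupI)
    show "HS S \<subseteq> carrier G" by (auto simp: HS_def)
    show "HS S \<noteq> {}" using one by (auto simp: HS_def)
    fix x y assume x: "x \<in> HS S" and y: "y \<in> HS S"
    show "inv x \<in> HS S" using V[of "Some (a, x, a)"] x by (auto simp: HS_def)
    show "x \<otimes> y \<in> HS S" using C[of "Some (a, x, a)" "Some (a, y, a)"] x y by (auto simp: HS_def)
  qed
qed

lemma AS_coset:
  assumes S: "inverse_subsemigroup II MM S" and g: "g \<in> carrier G" "Some (a, g, b) \<in> S"
  shows "AS S = HS S #> g"
proof -
  have C: "\<And>x y. x \<in> S \<Longrightarrow> y \<in> S \<Longrightarrow> MM x y \<in> S" and V: "\<And>x. x \<in> S \<Longrightarrow> iv G x \<in> S"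
    using S by (auto simp: invsub_iff)
  show ?thesis
  proof
    show "AS S \<subseteq> HS S #> g"
    proof
      fix x assume x: "x \<in> AS S"
      have "Some (a, x, b) \<in> S" using x by (auto simp: AS_def)
      moreover have "Some (b, inv g, a) \<in> S" using V[OF g(2)] by simp
      ultimately have "MM (Some (a, x, b)) (Some (b, inv g, a)) \<in> S" using C by blast
      then have "x \<otimes> inv g \<in> HS S" using x g by (auto simp: AS_def HS_def)
      moreover have "x = (x \<otimes> inv g) \<otimes> g" using x g by (auto simp: AS_def m_assoc)
      ultimately show "x \<in> HS S #> g" unfolding r_coset_def by blast
    qed
  next
    show "HS S #> g \<subseteq> AS S"
    proof
      fix x assume "x \<in> HS S #> g"
      then obtain h where h: "h \<in> HS S" "x = h \<otimes> g" unfolding r_coset_def by blast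
      have "MM (Some (a, h, a)) (Some (a, g, b)) \<in> S" using g h by (intro C) (auto simp: HS_def)
      then show "x \<in> AS S" using h g by (auto simp: AS_def HS_def)
    qed
  qed
qed

lemma HS_proper:
  assumes S: "inverse_subsemigroup II MM S" and g: "g \<in> carrier G" "Some (a, g, b) \<in> S"
    and ne: "S \<noteq> II"
  shows "HS S \<noteq> carrier G"
proof
  assume H: "HS S = carrier G"
  have C: "\<And>x y. x \<in> S \<Longrightarrow> y \<in> S \<Longrightarrow> MM x y \<in> S" and V: "\<And>x. x \<in> S \<Longrightarrow> iv G x \<in> S"
    and sub: "S \<subseteq> II"
    using S by (auto simp: invsub_iff)
  have aa: "Some (a, x, a) \<in> S" if "x \<in> carrier G" for x using H that by (auto simp: HS_def)
  have abx: "Some (a, x, b) \<in> S" if x: "x \<in> carrier G" for x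
  proof -
    have "MM (Some (a, x \<otimes> inv g, a)) (Some (a, g, b)) \<in> S" using g x by (intro C aa) auto
    moreover have "x \<otimes> inv g \<otimes> g = x" using x g by (simp add: m_assoc)
    ultimately show ?thesis using x g by simp
  qed
  have ba: "Some (b, x, a) \<in> S" if x: "x \<in> carrier G" for x
    using V[OF abx[of "inv x"]] x by simp
  have bb: "Some (b, x, b) \<in> S" if x: "x \<in> carrier G" for x
  proof -
    have "MM (Some (b, \<one>, a)) (Some (a, x, b)) \<in> S" using x by (intro C ba abx) auto
    then show ?thesis using x by simp
  qed
  have "II \<subseteq> S"
  proof
    fix y assume "y \<in> II"
    then show "y \<in> S"
    proof (cases y)
      case None
      have "MM (Some (a, \<one>, b)) (Some (a, \<one>, b)) \<in> S" by (intro C abx) auto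
      then show ?thesis using None ab by simp
    next
      case (Some v)
      from \<open>y \<in> II\<close> Some obtain i x j where "y = Some (i, x, j)" "i \<in> K" "x \<in> carrier G" "j \<in> K"
        unfolding mem_II by blast
      then show ?thesis using aa abx ba bb Kab by auto
    qed
  qed
  then show False using sub ne by blast
qed


lemma index_ge:
  assumes "subgroup H G" "H \<noteq> carrier G"
  shows "min_proper_index G \<le> card (rcosets H)"
  unfolding min_proper_index_def using assms by (intro Least_le) blast

lemma n_mul:
  assumes "subgroup H G" "H \<noteq> carrier G"
  shows "min_proper_index G * card H \<le> order G"
  using lagrange_finite[OF fin assms(1)] index_ge[OF assms] by (metis mult_le_mono1)

lemma n_ge2:
  assumes "subgroup H G" "H \<noteq> carrier G"
  shows "2 \<le> min_proper_index G"
proof -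
  have "\<exists>m H. subgroup H G \<and> H \<noteq> carrier G \<and> card (rcosets H) = m" using assms by blast
  then obtain H0 where H0: "subgroup H0 G" "H0 \<noteq> carrier G" "card (rcosets H0) = min_proper_index G"
    unfolding min_proper_index_def by (smt (verit, best) LeastI_ex)
  have L: "min_proper_index G * card H0 = order G" using lagrange_finite[OF fin H0(1)] H0(3) by simp
  have sub: "H0 \<subseteq> carrier G" using H0(1) subgroup.subset by blast
  have lt: "card H0 < order G" unfolding order_def
    using sub H0(2) fin by (meson psubsetI psubset_card_mono)
  have pos: "0 < card H0" using sub fin subgroup.one_closed[OF H0(1)]
    by (metis card_gt_0_iff empty_iff finite_subset)
  show ?thesis
  proof (rule ccontr)
    assume "\<not> 2 \<le> min_proper_index G"
    then have "min_proper_index G \<le> 1" by simp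
    then have "min_proper_index G * card H0 \<le> card H0" by simp
    then show False using L lt by simp
  qed
qed

lemma lower_bound:
  assumes finC: "finite C" and CS: "\<forall>S\<in>C. inverse_subsemigroup II MM S \<and> S \<noteq> II" and U: "\<Union>C = II"
  shows "min_proper_index G + 1 \<le> card C"
proof -
  define n where "n = min_proper_index G"
  define C' where "C' = {S\<in>C. \<exists>g\<in>carrier G. Some (a, g, b) \<in> S}"
  have C'C: "C' \<subseteq> C" unfolding C'_def by blast
  have finC': "finite C'" using finC C'C finite_subset by blast
  have props: "subgroup (HS S) G \<and> HS S \<noteq> carrier G \<and> card (AS S) = card (HS S)" if "S \<in> C'" for S
  proof -
    from that obtain g where g: "g \<in> carrier G" "Some (a, g, b) \<in> S" and S: "S \<in> C" unfolding C'_def by blast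
    have sg: "subgroup (HS S) G" using HS_sub CS S g by blast
    moreover have "HS S \<noteq> carrier G" using HS_proper CS S g by blast
    moreover have "card (AS S) = card (HS S)"
      using AS_coset[of S g] CS S g card_rcosets_equal[of "HS S #> g" "HS S"] rcosetsI subgroup.subset[OF sg]
      by auto
    ultimately show ?thesis by blast
  qed
  have nH: "n * card (HS S) \<le> order G" if "S \<in> C'" for S
    using n_mul props[OF that] unfolding n_def by blast
  have cov1: "carrier G \<subseteq> (\<Union>S\<in>C'. AS S)"
  proof
    fix x assume x: "x \<in> carrier G"
    then have "Some (a, x, b) \<in> \<Union>C" using U by simp
    then obtain S where "S \<in> C" "Some (a, x, b) \<in> S" by blast
    then show "x \<in> (\<Union>S\<in>C'. AS S)" using x unfolding C'_def AS_def by blast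
  qed
  have "order G \<le> card (\<Union>S\<in>C'. AS S)"
    unfolding order_def using cov1 finC' fin
    by (intro card_mono) (auto simp: AS_def)
  also have "\<dots> \<le> (\<Sum>S\<in>C'. card (AS S))" using card_UN_le finC' by blast
  also have "\<dots> = (\<Sum>S\<in>C'. card (HS S))" using props by (intro sum.cong) auto
  finally have o1: "order G \<le> (\<Sum>S\<in>C'. card (HS S))" .
  have "n * order G \<le> (\<Sum>S\<in>C'. n * card (HS S))" unfolding sum_distrib_left[symmetric] using o1 by simp
  also have "\<dots> \<le> (\<Sum>S\<in>C'. order G)" using nH by (intro sum_mono) auto
  also have "\<dots> = card C' * order G" by simp
  finally have "n * order G \<le> card C' * order G" .
  moreover have "0 < order G" using fin order_gt_0_iff_finite by blast
  ultimately have nC': "n \<le> card C'" by simp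
  have "C' \<noteq> {}"
  proof -
    have "Some (a, \<one>, b) \<in> \<Union>C" using U by simp
    then show ?thesis unfolding C'_def by blast
  qed
  then obtain S0 where S0: "S0 \<in> C'" by blast
  have n2: "2 \<le> n" using n_ge2 props[OF S0] unfolding n_def by blast
  show ?thesis
  proof (cases "C' = C")
    case False
    then have "card C' < card C" using C'C finC by (meson psubsetI psubset_card_mono)
    then show ?thesis using nC' unfolding n_def by simp
  next
    case True
    have one: "\<one> \<in> HS S" if "S \<in> C" for S using props that True subgroup.one_closed by blast
    have finH: "finite (HS S)" for S using fin unfolding HS_def by simp
    have cov2: "carrier G - {\<one>} \<subseteq> (\<Union>S\<in>C. HS S - {\<one>})"
    proof
      fix x assume x: "x \<in> carrier G - {\<one>}"
      then have "Some (a, x, a) \<in> \<Union>C" using U by simp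
      then obtain S where "S \<in> C" "Some (a, x, a) \<in> S" by blast
      then show "x \<in> (\<Union>S\<in>C. HS S - {\<one>})" using x unfolding HS_def by blast
    qed
    have "order G - 1 = card (carrier G - {\<one>})" unfolding order_def by simp
    also have "\<dots> \<le> card (\<Union>S\<in>C. HS S - {\<one>})"
      using cov2 finC finH by (intro card_mono) auto
    also have "\<dots> \<le> (\<Sum>S\<in>C. card (HS S - {\<one>}))" using card_UN_le finC by blast
    also have "\<dots> = (\<Sum>S\<in>C. card (HS S) - 1)" using one finH by (intro sum.cong) auto
    finally have o2: "order G - 1 \<le> (\<Sum>S\<in>C. card (HS S) - 1)" .
    have "n * (order G - 1) \<le> (\<Sum>S\<in>C. n * (card (HS S) - 1))" unfolding sum_distrib_left[symmetric] using o2 by simp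
    also have "\<dots> \<le> (\<Sum>S\<in>C. order G - n)"
    proof (intro sum_mono)
      fix S assume "S \<in> C"
      then have "n * card (HS S) \<le> order G" using nH True by blast
      then show "n * (card (HS S) - 1) \<le> order G - n" by (simp add: diff_mult_distrib2)
    qed
    also have "\<dots> = card C * (order G - n)" by simp
    finally have key: "n * (order G - 1) \<le> card C * (order G - n)" .
    have pos: "0 < card (HS S0)" using finH one[of S0] S0 True by (metis card_gt_0_iff empty_iff)
    have nle: "n \<le> order G" proof -
      have "n \<le> n * card (HS S0)" using pos by simp
      then show ?thesis using nH[OF S0] by linarith
    qed
    show ?thesis
    proof (rule ccontr)
      assume "\<not> ?thesis"
      then have "card C \<le> n" unfolding n_def by simp
      then have "card C * (order G - n) \<le> n * (order G - n)" by (simp add: mult_le_mono1)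
      with key have "n * (order G - 1) \<le> n * (order G - n)" by (rule le_trans)
      then have "order G - 1 \<le> order G - n" using n2 by (simp only: mult_le_cancel1)
      then show False using n2 nle by simp
    qed
  qed
qed


lemma no_cover:
  assumes o: "order G = 1" and finC: "finite C" and CS: "\<forall>S\<in>C. inverse_subsemigroup II MM S \<and> S \<noteq> II" and U: "\<Union>C = II"
  shows False
proof -
  have "Some (a, \<one>, b) \<in> \<Union>C" using U by simp
  then obtain S where S: "S \<in> C" "Some (a, \<one>, b) \<in> S" by blast
  have sg: "subgroup (HS S) G" using HS_sub CS S by blast
  have pr: "HS S \<noteq> carrier G" using HS_proper CS S by blast
  have "carrier G = {\<one>}" using o unfolding order_def by (metis card_1_singletonE one_closed singletonD)
  moreover have "\<one> \<in> HS S" "HS S \<subseteq> carrier G" using sg subgroup.one_closed subgroup.subset by blast+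
  ultimately show False using pr by (metis empty_iff subset_singletonD)
qed

definition SS :: "'a set \<Rightarrow> ('k \<Rightarrow> 'a) \<Rightarrow> ('k \<times> 'a \<times> 'k) option set" where
  "SS H c = {None} \<union> {Some (i, c i \<otimes> h \<otimes> inv (c j), j) | i j h. i \<in> K \<and> j \<in> K \<and> h \<in> H}"

definition S0 :: "('k \<times> 'a \<times> 'k) option set" where
  "S0 = {None} \<union> {Some (i, g, i) | i g. i \<in> K \<and> g \<in> carrier G}"

lemma grp_eq1:
  assumes "x \<in> carrier G" "y \<in> carrier G" "z \<in> carrier G" "h1 \<in> carrier G" "h2 \<in> carrier G"
  shows "x \<otimes> h1 \<otimes> inv y \<otimes> (y \<otimes> h2 \<otimes> inv z) = x \<otimes> (h1 \<otimes> h2) \<otimes> inv z"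
  using assms by (simp add: m_assoc) (simp add: m_assoc[symmetric])

lemma grp_eq2:
  assumes "x \<in> carrier G" "y \<in> carrier G" "h \<in> carrier G"
  shows "inv (x \<otimes> h \<otimes> inv y) = y \<otimes> inv h \<otimes> inv x"
  using assms by (simp add: inv_mult_group m_assoc)

lemma SS_memI: assumes "i \<in> K" "j \<in> K" "h \<in> H" shows "Some (i, c i \<otimes> h \<otimes> inv (c j), j) \<in> SS H c"
  unfolding SS_def using assms by blast

lemma SS_cases: assumes "x \<in> SS H c" "x \<noteq> None"
  shows "\<exists>i j h. x = Some (i, c i \<otimes> h \<otimes> inv (c j), j) \<and> i \<in> K \<and> j \<in> K \<and> h \<in> H"
  using assms unfolding SS_def by blast

lemma SS_None: "None \<in> SS H c" unfolding SS_def by blast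

lemma SS_invsub:
  assumes H: "subgroup H G" and c: "\<And>i. i \<in> K \<Longrightarrow> c i \<in> carrier G"
  shows "inverse_subsemigroup II MM (SS H c)"
  unfolding invsub_iff
proof (intro conjI ballI)
  have Hc: "\<And>h. h \<in> H \<Longrightarrow> h \<in> carrier G" using subgroup.mem_carrier[OF H] .
  show "SS H c \<subseteq> II"
  proof
    fix x assume "x \<in> SS H c"
    then show "x \<in> II"
    proof (cases "x = None")
      case False
      then obtain i j h where x': "x = Some (i, c i \<otimes> h \<otimes> inv (c j), j)" "i \<in> K" "j \<in> K" "h \<in> H"
        using SS_cases[OF \<open>x \<in> SS H c\<close>] by blast
      have "c i \<otimes> h \<otimes> inv (c j) \<in> carrier G" using c[OF x'(2)] c[OF x'(3)] Hc[OF x'(4)] by simp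
      then show ?thesis using x' by simp
    qed simp
  qed
  fix x assume x: "x \<in> SS H c"
  show "iv G x \<in> SS H c"
  proof (cases "x = None")
    case True then show ?thesis by (simp add: SS_def)
  next
    case False
    then obtain i j h where x': "x = Some (i, c i \<otimes> h \<otimes> inv (c j), j)" "i \<in> K" "j \<in> K" "h \<in> H"
      using SS_cases[OF x] False by blast
    have "iv G x = Some (j, inv (c i \<otimes> h \<otimes> inv (c j)), i)" using x' by simp
    also have "\<dots> = Some (j, c j \<otimes> inv h \<otimes> inv (c i), i)"
      using grp_eq2[OF c[OF x'(2)] c[OF x'(3)] Hc[OF x'(4)]] by simp
    finally have e: "iv G x = Some (j, c j \<otimes> inv h \<otimes> inv (c i), i)" .
    have "inv h \<in> H" using subgroup.m_inv_closed[OF H x'(4)] .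
    then show ?thesis unfolding e by (intro SS_memI x')
  qed
  fix y assume y: "y \<in> SS H c"
  show "MM x y \<in> SS H c"
  proof (cases "x = None \<or> y = None")
    case True then have "MM x y = None" by auto
    then show ?thesis using SS_None by simp
  next
    case False
    then obtain i j h where x': "x = Some (i, c i \<otimes> h \<otimes> inv (c j), j)" "i \<in> K" "j \<in> K" "h \<in> H"
      using SS_cases[OF x] False by blast
    obtain k l h2 where y': "y = Some (k, c k \<otimes> h2 \<otimes> inv (c l), l)" "k \<in> K" "l \<in> K" "h2 \<in> H"
      using SS_cases[OF y] False by blast
    have cx: "c i \<otimes> h \<otimes> inv (c j) \<in> carrier G" using c[OF x'(2)] c[OF x'(3)] Hc[OF x'(4)] by simp
    have M: "MM x y = (if j = k then Some (i, c i \<otimes> h \<otimes> inv (c j) \<otimes> (c k \<otimes> h2 \<otimes> inv (c l)), l) else None)"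
      unfolding x'(1) y'(1) by (rule mul_SS[OF cx])
    show ?thesis
    proof (cases "j = k")
      case False then show ?thesis using M by (simp add: SS_def)
    next
      case True
      have "MM x y = Some (i, c i \<otimes> (h \<otimes> h2) \<otimes> inv (c l), l)"
        using M True grp_eq1[OF c[OF x'(2)] c[OF x'(3)] c[OF y'(3)] Hc[OF x'(4)] Hc[OF y'(4)]] by simp
      moreover have "h \<otimes> h2 \<in> H" using subgroup.m_closed[OF H x'(4) y'(4)] .
      ultimately show ?thesis by (simp only:) (intro SS_memI x' y')
    qed
  qed
qed

lemma SS_proper:
  assumes H: "subgroup H G" "H \<noteq> carrier G" and ca: "c a = \<one>"
  shows "SS H c \<noteq> II"
proof
  assume E: "SS H c = II"
  obtain x where x: "x \<in> carrier G" "x \<notin> H" using H subgroup.subset by blast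
  have "Some (a, x, a) \<in> SS H c" using E x by simp
  then obtain h where "x = c a \<otimes> h \<otimes> inv (c a)" "h \<in> H" unfolding SS_def by blast
  then have "x = h" using ca H subgroup.mem_carrier by fastforce
  then show False using x \<open>h \<in> H\<close> by blast
qed

lemma S0_invsub: "inverse_subsemigroup II MM S0"
  unfolding invsub_iff
proof (intro conjI ballI)
  show "S0 \<subseteq> II" by (auto simp: S0_def)
  fix x assume x: "x \<in> S0"
  then show "iv G x \<in> S0" by (auto simp: S0_def)
  fix y assume y: "y \<in> S0"
  show "MM x y \<in> S0"
  proof (cases "x = None \<or> y = None")
    case True then show ?thesis by (auto simp: S0_def)
  next
    case False
    then obtain i g j h where "x = Some (i, g, i)" "y = Some (j, h, j)" "i \<in> K" "j \<in> K" "g \<in> carrier G" "h \<in> carrier G"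
      using x y by (auto simp: S0_def)
    then show ?thesis by (auto simp: S0_def)
  qed
qed

lemma S0_proper: "S0 \<noteq> II"
proof
  assume "S0 = II"
  then have "Some (a, \<one>, b) \<in> S0" by simp
  then show False using ab by (auto simp: S0_def)
qed


lemma exists_min:
  assumes "1 < order G"
  obtains H0 where "subgroup H0 G" "H0 \<noteq> carrier G" "card (rcosets H0) = min_proper_index G"
proof -
  have ne: "{\<one>} \<noteq> carrier G"
  proof
    assume E: "{\<one>} = carrier G"
    have "order G = card {\<one>}" unfolding order_def E ..
    then have "order G = 1" by simp
    then show False using assms by simp
  qed
  have ex: "\<exists>H. subgroup H G \<and> H \<noteq> carrier G \<and> card (rcosets H) = card (rcosets {\<one>})"
  proof (rule exI[of _ "{\<one>}"])
    show "subgroup {\<one>} G \<and> {\<one>} \<noteq> carrier G \<and> card (rcosets {\<one>}) = card (rcosets {\<one>})"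
      using triv_subgroup ne by simp
  qed
  have "\<exists>H. subgroup H G \<and> H \<noteq> carrier G \<and> card (rcosets H) = (LEAST m. \<exists>H. subgroup H G \<and> H \<noteq> carrier G \<and> card (rcosets H) = m)"
    by (rule LeastI_ex) (rule exI, rule ex)
  then obtain H0 where h: "subgroup H0 G" "H0 \<noteq> carrier G"
    "card (rcosets H0) = (LEAST m. \<exists>H. subgroup H G \<and> H \<noteq> carrier G \<and> card (rcosets H) = m)"
    by (elim exE conjE)
  show ?thesis by (rule that[OF h(1,2)]) (simp add: min_proper_index_def h(3))
qed

lemma upper:
  assumes "1 < order G"
  shows "\<exists>C. finite C \<and> card C \<le> min_proper_index G + 1 \<and> (\<forall>S\<in>C. inverse_subsemigroup II MM S \<and> S \<noteq> II) \<and> \<Union>C = II"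
proof -
  obtain H0 where H0: "subgroup H0 G" "H0 \<noteq> carrier G" "card (rcosets H0) = min_proper_index G"
    by (rule exists_min[OF assms])
  have H0c: "H0 \<subseteq> carrier G" using subgroup.subset[OF H0(1)] .
  define rep where "rep Q = (SOME g. g \<in> Q)" for Q :: "'a set"
  define cc where "cc Q = (\<lambda>i. if i = a then \<one> else inv (rep Q))" for Q
  define C where "C = insert S0 ((\<lambda>Q. SS H0 (cc Q)) ` (rcosets H0))"
  have repX: "rep Q \<in> carrier G \<and> Q = H0 #> rep Q" if Q: "Q \<in> rcosets H0" for Q
  proof -
    obtain g where g: "g \<in> carrier G" "Q = H0 #> g" using Q unfolding RCOSETS_def by blast
    have "g \<in> Q" unfolding g(2) using rcos_self[OF g(1) H0(1)] .
    then have r: "rep Q \<in> Q" unfolding rep_def by (rule someI)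
    have "rep Q \<in> carrier G" using r unfolding g(2) using r_coset_subset_G[OF H0c g(1)] by blast
    moreover have "Q = H0 #> rep Q"
    proof -
      have "rep Q \<in> H0 #> g" using r g(2) by simp
      then have "H0 #> g = H0 #> rep Q" by (rule repr_independence[OF _ g(1) H0(1)])
      then show ?thesis using g(2) by simp
    qed
    ultimately show ?thesis by blast
  qed
  have ccc: "cc Q i \<in> carrier G" if "Q \<in> rcosets H0" for Q i using repX[OF that] unfolding cc_def by auto
  have finR: "finite (rcosets H0)"
    using rcosets_subset_PowG[OF H0(1)] fin by (meson finite_Pow_iff finite_subset)
  have finC: "finite C" unfolding C_def using finR by simp
  have "card C \<le> Suc (card ((\<lambda>Q. SS H0 (cc Q)) ` (rcosets H0)))"
    unfolding C_def using finR by (simp add: card_insert_if)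
  also have "\<dots> \<le> Suc (card (rcosets H0))" using card_image_le[OF finR] by simp
  finally have cardC: "card C \<le> min_proper_index G + 1" using H0(3) by simp
  have props: "\<forall>S\<in>C. inverse_subsemigroup II MM S \<and> S \<noteq> II"
  proof
    fix S assume "S \<in> C"
    then show "inverse_subsemigroup II MM S \<and> S \<noteq> II"
    proof (cases "S = S0")
      case True then show ?thesis using S0_invsub S0_proper by simp
    next
      case False
      then obtain Q where Q: "Q \<in> rcosets H0" "S = SS H0 (cc Q)" using \<open>S \<in> C\<close> unfolding C_def by blast
      have "inverse_subsemigroup II MM S" unfolding Q(2) by (rule SS_invsub[OF H0(1)]) (rule ccc[OF Q(1)])
      moreover have "S \<noteq> II" using SS_proper[OF H0(1,2), of "cc Q"] Q(2) unfolding cc_def by simp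
      ultimately show ?thesis by blast
    qed
  qed
  have "II \<subseteq> \<Union>C"
  proof
    fix y assume y: "y \<in> II"
    show "y \<in> \<Union>C"
    proof (cases y)
      case None
      then show ?thesis unfolding C_def S0_def by blast
    next
      case (Some v)
      then obtain i x j where v: "y = Some (i, x, j)" "i \<in> K" "x \<in> carrier G" "j \<in> K"
        using y unfolding mem_II by blast
      show ?thesis
      proof (cases "i = j")
        case True
        then have "y \<in> S0" using v unfolding S0_def by blast
        then show ?thesis unfolding C_def by blast
      next
        case False
        then have ij: "(i = a \<and> j = b) \<or> (i = b \<and> j = a)" using v Kab by auto
        show ?thesis
        proof (cases "i = a")
          case True
          then have ij: "i = a" "j = b" using ij ab by auto
          define Q where "Q = H0 #> x"
          have Q: "Q \<in> rcosets H0" unfolding Q_def using rcosetsI[OF H0c v(3)] .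
          have "x \<in> Q" unfolding Q_def using rcos_self[OF v(3) H0(1)] .
          then have "x \<in> H0 #> rep Q" using repX[OF Q] by simp
          then obtain h where h: "h \<in> H0" "x = h \<otimes> rep Q" unfolding r_coset_def by blast
          have rc: "rep Q \<in> carrier G" using repX[OF Q] by blast
          have "Some (a, cc Q a \<otimes> h \<otimes> inv (cc Q b), b) \<in> SS H0 (cc Q)" using SS_memI h(1) by simp
          moreover have "cc Q a \<otimes> h \<otimes> inv (cc Q b) = x"
            using h rc ab H0c unfolding cc_def by auto
          ultimately have "y \<in> SS H0 (cc Q)" using v ij by simp
          then show ?thesis unfolding C_def using Q by blast
        next
          case False
          then have ij: "i = b" "j = a" using ij by auto
          define Q where "Q = H0 #> inv x"
          have ix: "inv x \<in> carrier G" using v(3) by simp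
          have Q: "Q \<in> rcosets H0" unfolding Q_def using rcosetsI[OF H0c ix] .
          have "inv x \<in> Q" unfolding Q_def using rcos_self[OF ix H0(1)] .
          then have "inv x \<in> H0 #> rep Q" using repX[OF Q] by simp
          then obtain h where h: "h \<in> H0" "inv x = h \<otimes> rep Q" unfolding r_coset_def by blast
          have rc: "rep Q \<in> carrier G" using repX[OF Q] by blast
          have hc: "h \<in> carrier G" using subsetD[OF H0c h(1)] .
          have ih: "inv h \<in> H0" using subgroup.m_inv_closed[OF H0(1) h(1)] .
          have "Some (b, cc Q b \<otimes> inv h \<otimes> inv (cc Q a), a) \<in> SS H0 (cc Q)" using SS_memI ih by simp
          moreover have "cc Q b \<otimes> inv h \<otimes> inv (cc Q a) = x"
          proof -
            have "cc Q b \<otimes> inv h \<otimes> inv (cc Q a) = inv (rep Q) \<otimes> inv h"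
              using ab rc hc unfolding cc_def by simp
            also have "\<dots> = inv (h \<otimes> rep Q)" using rc hc by (simp add: inv_mult_group)
            also have "\<dots> = x" using v(3) by (simp flip: h(2))
            finally show ?thesis .
          qed
          ultimately have "y \<in> SS H0 (cc Q)" using v ij by simp
          then show ?thesis unfolding C_def using Q by blast
        qed
      qed
    qed
  qed
  moreover have "\<Union>C \<subseteq> II"
  proof
    fix z assume "z \<in> \<Union>C"
    then obtain S where "S \<in> C" "z \<in> S" by blast
    then have "inverse_subsemigroup II MM S" using props by blast
    then have "S \<subseteq> II" unfolding invsub_iff by (elim conjE)
    then show "z \<in> II" using \<open>z \<in> S\<close> by blast
  qed
  ultimately have U: "\<Union>C = II" by (rule equalityI[rotated])
  show ?thesis by (rule exI[of _ C]) (intro conjI finC cardC props U)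
qed

end

theorem mainTheorem16:
  fixes G :: "('g, 'b) monoid_scheme" and K :: "'k set"
  assumes "group G" and "finite (carrier G)" and "card K = 2"
  shows "(card (carrier G) = 1 \<longrightarrow>
            sigma_i (rees0_carrier K G) (rees0_mult G (diag_matrix G)) = \<infinity>)
       \<and> (card (carrier G) > 1 \<longrightarrow>
            sigma_i (rees0_carrier K G) (rees0_mult G (diag_matrix G))
              = enat (min_proper_index G + 1))"
proof -
  obtain a b where K: "K = {a, b}" "a \<noteq> b" using assms(3) unfolding card_2_iff by blast
  have Bl: "brandt G K a b"
    unfolding brandt_def brandt_axioms_def by (intro conjI assms(1,2) K)
  let ?I = "rees0_carrier K G" and ?M = "rees0_mult G (diag_matrix G)"
  let ?P = "\<lambda>n. \<exists>C. finite C \<and> card C = n \<and> (\<forall>S\<in>C. inverse_subsemigroup ?I ?M S \<and> S \<noteq> ?I) \<and> \<Union>C = ?I"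
  have A: "card (carrier G) = 1 \<longrightarrow> sigma_i ?I ?M = \<infinity>"
  proof
    assume o: "card (carrier G) = 1"
    have "\<not> ?P n" for n
    proof
      assume "?P n"
      then obtain C where C: "finite C" "\<forall>S\<in>C. inverse_subsemigroup ?I ?M S \<and> S \<noteq> ?I" "\<Union>C = ?I"
        by (elim exE conjE)
      have o': "order G = 1" using o unfolding order_def .
      show False by (rule brandt.no_cover[OF Bl o' C])
    qed
    then have nP: "\<not> (\<exists>n. ?P n)" by blast
    show "sigma_i ?I ?M = \<infinity>"
      unfolding sigma_i_def by (simp only: if_not_P[OF nP])
  qed
  have Bp: "card (carrier G) > 1 \<longrightarrow> sigma_i ?I ?M = enat (min_proper_index G + 1)"
  proof
    assume o: "card (carrier G) > 1"
    obtain C where C: "finite C" "card C \<le> min_proper_index G + 1"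
      "\<forall>S\<in>C. inverse_subsemigroup ?I ?M S \<and> S \<noteq> ?I" "\<Union>C = ?I"
      using brandt.upper[OF Bl o[folded order_def]] by (elim exE conjE)
    have "min_proper_index G + 1 \<le> card C" using brandt.lower_bound[OF Bl C(1,3,4)] .
    then have "card C = min_proper_index G + 1" using C(2) by simp
    then have Pn: "?P (min_proper_index G + 1)" using C(1,3,4) by (intro exI[of _ C] conjI)
    have lb: "min_proper_index G + 1 \<le> m" if "?P m" for m
    proof -
      from that obtain D where D: "finite D" "card D = m" "\<forall>S\<in>D. inverse_subsemigroup ?I ?M S \<and> S \<noteq> ?I" "\<Union>D = ?I"
        by (elim exE conjE)
      show ?thesis using brandt.lower_bound[OF Bl D(1,3,4)] D(2) by simp
    qed
    have L: "(LEAST n. ?P n) = min_proper_index G + 1" by (rule Least_equality[where P="?P", OF Pn lb])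
    have "\<exists>n. ?P n" using Pn by (rule exI)
    then show "sigma_i ?I ?M = enat (min_proper_index G + 1)"
      unfolding sigma_i_def L[symmetric] by (simp only: if_True)
  qed
  show ?thesis using A Bp by (rule conjI)
qed

end
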